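(* (1) For $[P]\in G(3,V)$ (a plane in $\mathbb P^6$), the subspace $L^2_P:=\{Q\in H^0(\mathcal O_{\mathbb P^6}(2)):P\subset\{Q=0\}\}$ has codimension $6$ in $H^0(\mathcal O_{\mathbb P^6}(2))$. For planes $P\neq P'$, the subspace $L^2_{P,P'}:=\{Q\in H^0(\mathcal O_{\mathbb P^6}(2)):P\cup P'\subset\{Q=0\}\}$ has codimension $6$ in $L^2_P$ if $P\cap P'=\emptyset$, codimension $5$ if $P\cap P'$ is a point, and codimension $3$ if $P\cap P'$ is a line. (2) Let $X\subset\mathbb P^6$ be a smooth cubic $5$-fold with $F_2(X)$ a smooth surface. For $[P]\neq[P']\in F_2(X)$ with $P\cap P'$ a line, $\dim(J_{X,2}\cap L^2_{P,P'})\ge1$, and if $X$ is general, $\dim(J_{X,2}\cap L^2_{P,P'})\ge2$. Consequently $(J_{X,2}\cap L^2_P)+L^2_{P,P'}\subsetneq L^2_P$, and for $X$ general this subspace has codimension at least $2$ in $L^2_P$.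
   Context: $H^0(\mathcal O_{\mathbb P^6}(2))$ is the space of quadratic forms in the coordinates $X_0,\dots,X_6$ of $\mathbb P^6$. For a cubic $X=\{\mathrm{eq}_X=0\}$, $J_{X,2}\subset H^0(\mathcal O_{\mathbb P^6}(2))$ is the degree $2$ part of the Jacobian ideal, spanned by the partial derivatives $\partial\mathrm{eq}_X/\partial X_i$, $i=0,\dots,6$. $F_2(X)$ is the variety of planes contained in $X$. (For $[P]\in F_2(X)$ smooth point, $\dim(J_{X,2}\cap L^2_P)=3$.) *)

theory Defs
  imports "HOL-Analysis.Analysis" "HOL-Library.Function_Algebras"
begin

text \<open>Ambient space V = C^7, so that P^6 = P(V). Planes in P^6 = 3-dimensional
  complex linear subspaces of V (the Grassmannian G(3,V)).\<close>

type_synonym vec7 = "complex ^ 7"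

definition is_plane :: "vec7 set \<Rightarrow> bool" where
  "is_plane W \<longleftrightarrow> vec.subspace W \<and> vec.dim W = 3"

definition fscale :: "complex \<Rightarrow> (vec7 \<Rightarrow> complex) \<Rightarrow> (vec7 \<Rightarrow> complex)" where
  "fscale c q = (\<lambda>x. c * q x)"

abbreviation fdim :: "(vec7 \<Rightarrow> complex) set \<Rightarrow> nat" where
  "fdim \<equiv> vector_space.dim fscale"

abbreviation fspan :: "(vec7 \<Rightarrow> complex) set \<Rightarrow> (vec7 \<Rightarrow> complex) set" where
  "fspan \<equiv> module.span fscale"

definition hscale :: "complex \<Rightarrow> (vec7 \<Rightarrow> vec7) \<Rightarrow> (vec7 \<Rightarrow> vec7)" where
  "hscale c \<phi> = (\<lambda>x. c *s \<phi> x)"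

abbreviation hdim :: "(vec7 \<Rightarrow> vec7) set \<Rightarrow> nat" where
  "hdim \<equiv> vector_space.dim hscale"

text \<open>H^0(O_{P^6}(2)): quadratic forms in X_0..X_6, identified with the
  polynomial functions they define on V (faithful over the infinite field C).\<close>

definition quad_forms :: "(vec7 \<Rightarrow> complex) set" where
  "quad_forms = {q. \<exists>A :: 7 \<Rightarrow> 7 \<Rightarrow> complex.
       \<forall>x. q x = (\<Sum>i\<in>UNIV. \<Sum>j\<in>UNIV. A i j * x$i * x$j)}"

definition L2 :: "vec7 set \<Rightarrow> (vec7 \<Rightarrow> complex) set" where
  "L2 W = {q \<in> quad_forms. \<forall>x\<in>W. q x = 0}"

definition L2pair :: "vec7 set \<Rightarrow> vec7 set \<Rightarrow> (vec7 \<Rightarrow> complex) set" where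
  "L2pair W W' = {q \<in> quad_forms. \<forall>x\<in>W \<union> W'. q x = 0}"

definition sum_sp :: "(vec7 \<Rightarrow> complex) set \<Rightarrow> (vec7 \<Rightarrow> complex) set \<Rightarrow> (vec7 \<Rightarrow> complex) set" where
  "sum_sp A B = {a + b | a b. a \<in> A \<and> b \<in> B}"

text \<open>Cubic forms given by a coefficient tensor c (all 343 coefficients;
  every cubic form arises this way).\<close>

definition cubic_of :: "(7 \<Rightarrow> 7 \<Rightarrow> 7 \<Rightarrow> complex) \<Rightarrow> vec7 \<Rightarrow> complex" where
  "cubic_of c = (\<lambda>x. \<Sum>i\<in>UNIV. \<Sum>j\<in>UNIV. \<Sum>k\<in>UNIV. c i j k * x$i * x$j * x$k)"

definition pd :: "7 \<Rightarrow> (vec7 \<Rightarrow> complex) \<Rightarrow> vec7 \<Rightarrow> complex" where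
  "pd i f x = deriv (\<lambda>t. f (x + t *s axis i 1)) 0"

definition J2 :: "(vec7 \<Rightarrow> complex) \<Rightarrow> (vec7 \<Rightarrow> complex) set" where
  "J2 f = fspan (range (\<lambda>i. pd i f))"

text \<open>Smooth cubic hypersurface (Jacobian criterion): the partials have no
  common zero in P^6.\<close>

definition smooth_hyp :: "(vec7 \<Rightarrow> complex) \<Rightarrow> bool" where
  "smooth_hyp f \<longleftrightarrow> (\<forall>x. (\<forall>i. pd i f x = 0) \<longrightarrow> x = 0)"

definition F2 :: "(vec7 \<Rightarrow> complex) \<Rightarrow> vec7 set set" where
  "F2 f = {W. is_plane W \<and> (\<forall>x\<in>W. f x = 0)}"

text \<open>Hom(W,V), realised as maps that are linear on W and zero off W.\<close>

definition hom_on :: "vec7 set \<Rightarrow> (vec7 \<Rightarrow> vec7) set" where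
  "hom_on W = {\<phi>. (\<forall>x\<in>W. \<forall>y\<in>W. \<phi> (x + y) = \<phi> x + \<phi> y)
                 \<and> (\<forall>c. \<forall>x\<in>W. \<phi> (c *s x) = c *s \<phi> x)
                 \<and> (\<forall>x. x \<notin> W \<longrightarrow> \<phi> x = 0)}"

text \<open>Zariski tangent space of F_2(X) at [P]=[W]:
  T = ker (Hom(W,V/W) \<rightarrow> H^0(O_P(3))), phi |-> (w |-> df_w(phi w)).
  We compute its dimension as dim{phi in Hom(W,V) : df_w(phi w)=0 on W}
  minus dim Hom(W,W) = 9.\<close>

definition tan_lift :: "(vec7 \<Rightarrow> complex) \<Rightarrow> vec7 set \<Rightarrow> (vec7 \<Rightarrow> vec7) set" where
  "tan_lift f W = {\<phi> \<in> hom_on W. \<forall>w\<in>W. deriv (\<lambda>t. f (w + t *s \<phi> w)) 0 = 0}"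

definition F2_tangent_dim :: "(vec7 \<Rightarrow> complex) \<Rightarrow> vec7 set \<Rightarrow> nat" where
  "F2_tangent_dim f W = hdim (tan_lift f W) - 9"

text \<open>F_2(X) is a smooth surface: nonempty and its Zariski tangent space is
  2-dimensional at every point (every component has dimension \<ge> 2 = expected
  dimension, so this is equivalent to being smooth of pure dimension 2).\<close>

definition F2_smooth_surface :: "(vec7 \<Rightarrow> complex) \<Rightarrow> bool" where
  "F2_smooth_surface f \<longleftrightarrow> F2 f \<noteq> {} \<and> (\<forall>W\<in>F2 f. F2_tangent_dim f W = 2)"

text \<open>Polynomial functions on the coefficient space of cubics, for the
  Zariski topology ("X general").\<close>

inductive poly_fun :: "((7 \<Rightarrow> 7 \<Rightarrow> 7 \<Rightarrow> complex) \<Rightarrow> complex) \<Rightarrow> bool" where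
  pf_const: "poly_fun (\<lambda>c. a)"
| pf_coord: "poly_fun (\<lambda>c. c i j k)"
| pf_add: "poly_fun p \<Longrightarrow> poly_fun q \<Longrightarrow> poly_fun (\<lambda>c. p c + q c)"
| pf_mult: "poly_fun p \<Longrightarrow> poly_fun q \<Longrightarrow> poly_fun (\<lambda>c. p c * q c)"

end

theory Submission
  imports Defs
begin


interpretation fv: vector_space fscale
  by unfold_locales (auto simp: fscale_def fun_eq_iff algebra_simps)

interpretation hv: vector_space hscale
  by unfold_locales (auto simp: hscale_def fun_eq_iff algebra_simps vector_space_over_itself.scale_right_distrib scalar_mult_eq_scaleR)

lemma "fdim S = fv.dim S" ..
lemma "vec.dim (UNIV::vec7 set) = 7" by (simp add: card_cart_basis)


locale frame =
  fixes b :: "nat \<Rightarrow> vec7"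
  assumes inj_b: "inj_on b {0..<7}" and ind_b: "vec.independent (b ` {0..<7})"
begin

abbreviation "BB \<equiv> b ` {0..<7}"

lemma card_BB: "card BB = 7" using inj_b by (simp add: card_image)

lemma span_BB: "vec.span BB = UNIV"
proof -
  have "vec.dim (UNIV::vec7 set) = 7" by (simp add: card_cart_basis)
  then show ?thesis using vec.card_eq_dim[of BB UNIV] card_BB ind_b by auto
qed

definition crd :: "nat \<Rightarrow> vec7 \<Rightarrow> complex" where
  "crd i x = vec.representation BB x (b i)"

lemma crd_add: "crd i (x + y) = crd i x + crd i y"
  unfolding crd_def using vec.representation_add[OF ind_b] span_BB by auto

lemma crd_scale: "crd i (c *s x) = c * crd i x"
  unfolding crd_def using vec.representation_scale[OF ind_b] span_BB by auto

lemma crd_zero: "crd i 0 = 0"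
  unfolding crd_def by (simp add: vec.representation_zero)

lemma crd_sum: "crd i (sum f S) = (\<Sum>s\<in>S. crd i (f s))"
  by (induction S rule: infinite_finite_induct) (auto simp: crd_add crd_zero)

lemma crd_b: "i < 7 \<Longrightarrow> j < 7 \<Longrightarrow> crd i (b j) = (if i = j then 1 else 0)"
  unfolding crd_def using vec.representation_basis[OF ind_b, of "b j"] inj_b
  by (auto simp: inj_on_def)

lemma expand: "x = (\<Sum>i<7. crd i x *s b i)"
proof -
  have "x = (\<Sum>v\<in>BB. vec.representation BB x v *s v)"
    using vec.sum_representation_eq[OF ind_b, of x BB] span_BB by auto
  also have "\<dots> = (\<Sum>i\<in>{0..<7}. crd i x *s b i)"
    unfolding crd_def by (subst sum.reindex[OF inj_b]) simp
  finally show ?thesis by (simp add: atLeast0LessThan)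
qed

lemma crd_linform: "crd i x = (\<Sum>j\<in>UNIV. x $ j * crd i (axis j 1))"
proof -
  have "x = (\<Sum>j\<in>UNIV. x $ j *s axis j 1)" by (rule basis_expansion[symmetric])
  then have "crd i x = crd i (\<Sum>j\<in>UNIV. x $ j *s axis j 1)" by simp
  also have "\<dots> = (\<Sum>j\<in>UNIV. x $ j * crd i (axis j 1))" by (simp add: crd_sum crd_scale)
  finally show ?thesis .
qed

lemma crd_span: assumes "z \<in> vec.span (b ` I)" "I \<subseteq> {0..<7}" "i < 7" "i \<notin> I"
  shows "crd i z = 0"
  using assms(1)
proof (induction rule: vec.span_induct_alt)
  case base then show ?case by (simp add: crd_zero)
next
  case (step c x y)
  then obtain j where "j \<in> I" "x = b j" by auto
  moreover have "j < 7" using \<open>j \<in> I\<close> assms(2) by auto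
  ultimately show ?case using step assms by (auto simp: crd_add crd_scale crd_b)
qed

end

definition "PL = [(i,j). j <- [0..<7], i <- [0..<Suc j]]"
lemma PL_mem: "((i,j) \<in> set PL) = (i \<le> j \<and> j < (7::nat))"
proof
  assume "(i,j) \<in> set PL" then show "i \<le> j \<and> j < 7" unfolding PL_def by auto
next
  assume "i \<le> j \<and> j < 7" then show "(i,j) \<in> set PL" unfolding PL_def
    by (simp, intro bexI[of _ j]) auto
qed
lemma "card (set PL) = 28"
  unfolding PL_def by (simp add: upt_rec)
lemma "card {p \<in> set PL. \<not> (fst p \<in> {0,1,2} \<and> snd p \<in> {0,1,2}) \<and> \<not> (fst p \<in> {0,1} \<and> snd p \<in> {0,1}) \<and> \<not> (fst p \<in> {0,1,3} \<and> snd p \<in> {0,1,3})} = 19"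
  unfolding PL_def set_filter[symmetric] by (simp add: upt_rec)


lemma fsum_apply: "(\<Sum>p\<in>S. g p) x = (\<Sum>p\<in>S. g p x)"
  by (induction S rule: infinite_finite_induct) auto

lemma fscale_apply[simp]: "fscale c q x = c * q x" by (simp add: fscale_def)

lemma fspan_sum_mem:
  assumes "finite S" "\<And>p. p \<in> S \<Longrightarrow> c p \<noteq> 0 \<Longrightarrow> g p \<in> G"
  shows "(\<lambda>x. \<Sum>p\<in>S. c p * g p x) \<in> fspan G"
proof -
  have "(\<lambda>x. \<Sum>p\<in>S. c p * g p x) = (\<Sum>p\<in>S. fscale (c p) (g p))"
    by (simp add: fun_eq_iff fsum_apply)
  also have "\<dots> \<in> fspan G"
  proof (rule fv.span_sum)
    fix p assume "p \<in> S"
    show "fscale (c p) (g p) \<in> fspan G"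
    proof (cases "c p = 0")
      case True then have "fscale (c p) (g p) = 0" by (simp add: fun_eq_iff)
      then show ?thesis using fv.span_zero by metis
    next
      case False then show ?thesis using assms \<open>p \<in> S\<close> by (intro fv.span_scale fv.span_base) auto
    qed
  qed
  finally show ?thesis .
qed

lemma sum4swap: "(\<Sum>i\<in>A. \<Sum>j\<in>B. \<Sum>k\<in>C. \<Sum>l\<in>D. f i j k l) = (\<Sum>k\<in>C. \<Sum>l\<in>D. \<Sum>i\<in>A. \<Sum>j\<in>B. f i j k l)"
proof -
  have "(\<Sum>i\<in>A. \<Sum>j\<in>B. \<Sum>k\<in>C. \<Sum>l\<in>D. f i j k l) = (\<Sum>i\<in>A. \<Sum>k\<in>C. \<Sum>j\<in>B. \<Sum>l\<in>D. f i j k l)"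
    by (rule sum.cong[OF refl], rule sum.swap)
  also have "\<dots> = (\<Sum>k\<in>C. \<Sum>i\<in>A. \<Sum>j\<in>B. \<Sum>l\<in>D. f i j k l)" by (rule sum.swap)
  also have "\<dots> = (\<Sum>k\<in>C. \<Sum>i\<in>A. \<Sum>l\<in>D. \<Sum>j\<in>B. f i j k l)"
    by (rule sum.cong[OF refl], rule sum.cong[OF refl], rule sum.swap)
  also have "\<dots> = (\<Sum>k\<in>C. \<Sum>l\<in>D. \<Sum>i\<in>A. \<Sum>j\<in>B. f i j k l)"
    by (rule sum.cong[OF refl], rule sum.swap)
  finally show ?thesis .
qed

lemma quad_zero: "0 \<in> quad_forms"
  unfolding quad_forms_def by (intro CollectI exI[of _ "\<lambda>i j. 0"]) simp

lemma quad_add: "q \<in> quad_forms \<Longrightarrow> r \<in> quad_forms \<Longrightarrow> q + r \<in> quad_forms"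
  unfolding quad_forms_def
  apply clarify
  subgoal for A B by (intro CollectI exI[of _ "\<lambda>i j. A i j + B i j"]) (simp add: algebra_simps sum.distrib)
  done

lemma quad_scale: "q \<in> quad_forms \<Longrightarrow> fscale c q \<in> quad_forms"
  unfolding quad_forms_def
  apply clarify
  subgoal for A by (intro CollectI exI[of _ "\<lambda>i j. c * A i j"]) (simp add: algebra_simps sum_distrib_left)
  done

lemma subspace_vanish: "fv.subspace {q \<in> quad_forms. \<forall>x\<in>Z. q x = 0}"
  unfolding fv.subspace_def using quad_zero quad_add quad_scale by auto

context frame begin

definition mon :: "nat \<Rightarrow> nat \<Rightarrow> vec7 \<Rightarrow> complex" where
  "mon i j x = crd i x * crd j x"

definition monp :: "nat \<times> nat \<Rightarrow> vec7 \<Rightarrow> complex" where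
  "monp p = mon (fst p) (snd p)"

lemma mon_sym: "mon i j = mon j i" by (simp add: mon_def fun_eq_iff mult.commute)

lemma mon_quad: "mon i j \<in> quad_forms"
  unfolding quad_forms_def mon_def
  apply (intro CollectI exI[of _ "\<lambda>k l. crd i (axis k 1) * crd j (axis l 1)"] allI)
  apply (subst (1 2) crd_linform)
  apply (simp add: sum_product mult_ac)
  done

lemma quad_expand:
  assumes "q \<in> quad_forms"
  shows "\<exists>B. \<forall>x. q x = (\<Sum>k<7. \<Sum>l<7. B k l * mon k l x)"
proof -
  obtain A where A: "\<And>x. q x = (\<Sum>i\<in>UNIV. \<Sum>j\<in>UNIV. A i j * x$i * x$j)"
    using assms unfolding quad_forms_def by auto
  have xi: "x $ i = (\<Sum>k<7. crd k x * b k $ i)" for x i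
  proof -
    have "x $ i = (\<Sum>k<7. crd k x *s b k) $ i" using expand[of x] by simp
    then show ?thesis by (simp add: sum_component)
  qed
  define B where "B k l = (\<Sum>i\<in>UNIV. \<Sum>j\<in>UNIV. A i j * b k $ i * b l $ j)" for k l
  have "q x = (\<Sum>k<7. \<Sum>l<7. B k l * mon k l x)" for x
  proof -
    have "q x = (\<Sum>i\<in>UNIV. \<Sum>j\<in>UNIV. \<Sum>k<7. \<Sum>l<7. A i j * b k $ i * b l $ j * (crd k x * crd l x))"
      unfolding A by (subst (1 2) xi) (simp add: sum_distrib_left sum_distrib_right mult_ac)
    also have "\<dots> = (\<Sum>k<7. \<Sum>l<7. \<Sum>i\<in>UNIV. \<Sum>j\<in>UNIV. A i j * b k $ i * b l $ j * (crd k x * crd l x))"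
      by (rule sum4swap)
    also have "\<dots> = (\<Sum>k<7. \<Sum>l<7. B k l * mon k l x)"
      by (simp add: B_def mon_def sum_distrib_right)
    finally show ?thesis .
  qed
  then show ?thesis by blast
qed

end


lemma sum_split_diag: "(\<Sum>k<n. \<Sum>l<n. f k l) = (\<Sum>k<n. f k k) + (\<Sum>l<n. \<Sum>k<l. f k l + f l k)"
  for f :: "nat \<Rightarrow> nat \<Rightarrow> 'a::comm_monoid_add"
  by (induction n) (simp_all add: sum.distrib algebra_simps)

lemma dd_sum: "k < (n::nat) \<Longrightarrow> m < n \<Longrightarrow> (\<Sum>k'<n. \<Sum>l<n. if k' = k \<and> l = m then c k' l else 0) = c k m"
proof -
  assume a: "k < n" "m < n"
  have "(\<Sum>k'<n. \<Sum>l<n. if k' = k \<and> l = m then c k' l else 0) = (\<Sum>k'<n. if k' = k then (\<Sum>l<n. if l = m then c k l else 0) else 0)"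
    by (intro sum.cong) auto
  then show ?thesis using a by (simp add: sum.delta)
qed

lemma fspan_term: "c = 0 \<or> g \<in> G \<Longrightarrow> fscale c g \<in> fspan G"
proof (cases "c = 0")
  case True then have "fscale c g = 0" by (simp add: fun_eq_iff)
  then show ?thesis using fv.span_zero by metis
qed (auto intro: fv.span_scale fv.span_base)

definition Sset :: "nat set set \<Rightarrow> (nat \<times> nat) set" where
  "Sset II = {p \<in> set PL. \<forall>I\<in>II. \<not> (fst p \<in> I \<and> snd p \<in> I)}"

context frame begin

lemma crd_bd: "i < 7 \<Longrightarrow> k < 7 \<Longrightarrow> crd i (b k) = (if i = k then 1 else 0)" by (simp add: crd_b)

lemma mon_b: "i<7 \<Longrightarrow> j<7 \<Longrightarrow> k<7 \<Longrightarrow> mon i j (b k) = (if i = k \<and> j = k then 1 else 0)"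
  by (simp add: mon_def crd_b)

lemma mon_bb: "i<7 \<Longrightarrow> j<7 \<Longrightarrow> k<7 \<Longrightarrow> l<7 \<Longrightarrow>
   mon i j (b k + b l) = ((if i = k then 1 else 0) + (if i = l then 1 else 0)) * ((if j = k then 1 else 0) + (if j = l then 1 else 0))"
  by (simp add: mon_def crd_add crd_b)

lemma PL_lt: "p \<in> set PL \<Longrightarrow> fst p < 7 \<and> snd p < 7 \<and> fst p \<le> snd p"
  by (cases p) (simp add: PL_mem)

lemma finite_PL: "finite (set PL)" by simp

lemma eval_b: assumes "S \<subseteq> set PL" "k < 7"
  shows "(\<Sum>p\<in>S. a p * monp p (b k)) = (if (k,k) \<in> S then a (k,k) else 0)"
proof -
  have "(\<Sum>p\<in>S. a p * monp p (b k)) = (\<Sum>p\<in>S. if p = (k,k) then a p else 0)"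
  proof (rule sum.cong[OF refl])
    fix p assume "p \<in> S" then have "p \<in> set PL" using assms(1) by auto
    then have "fst p < 7" "snd p < 7" using PL_lt by auto
    then show "a p * monp p (b k) = (if p = (k,k) then a p else 0)"
      using assms by (cases p) (auto simp: monp_def mon_b)
  qed
  also have "\<dots> = (if (k,k) \<in> S then a (k,k) else 0)"
    using assms finite_subset[OF assms(1) finite_PL] by (simp add: sum.delta')
  finally show ?thesis .
qed

lemma eval_bb: assumes "S \<subseteq> set PL" "k < l" "l < 7"
  shows "(\<Sum>p\<in>S. a p * monp p (b k + b l)) =
     (if (k,k) \<in> S then a (k,k) else 0) + (if (l,l) \<in> S then a (l,l) else 0) + (if (k,l) \<in> S then a (k,l) else 0)"
proof -
  have fin: "finite S" using finite_subset[OF assms(1) finite_PL] .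
  have "(\<Sum>p\<in>S. a p * monp p (b k + b l)) = (\<Sum>p\<in>S. (if p = (k,k) then a p else 0) + (if p = (l,l) then a p else 0) + (if p = (k,l) then a p else 0))"
  proof (rule sum.cong[OF refl])
    fix p assume "p \<in> S" then have "p \<in> set PL" using assms(1) by auto
    then have "fst p < 7" "snd p < 7" "fst p \<le> snd p" using PL_lt by auto
    then show "a p * monp p (b k + b l) = (if p = (k,k) then a p else 0) + (if p = (l,l) then a p else 0) + (if p = (k,l) then a p else 0)"
      using assms by (cases p) (auto simp: monp_def mon_bb)
  qed
  also have "\<dots> = (if (k,k) \<in> S then a (k,k) else 0) + (if (l,l) \<in> S then a (l,l) else 0) + (if (k,l) \<in> S then a (k,l) else 0)"
    using fin by (simp add: sum.distrib sum.delta')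
  finally show ?thesis .
qed

lemma indep_key:
  assumes S: "S \<subseteq> set PL" and z: "\<And>x. (\<Sum>p\<in>S. a p * monp p x) = 0" and p: "p \<in> S"
  shows "a p = 0"
proof -
  obtain k l where kl: "p = (k,l)" by (cases p)
  have kl7: "k \<le> l" "l < 7" using PL_lt[of p] S p kl by auto
  have diag: "a (m,m) = 0" if "(m,m) \<in> S" "m < 7" for m
    using eval_b[OF S that(2), of a] z that by auto
  show ?thesis
  proof (cases "k = l")
    case True then show ?thesis using diag kl p kl7 by auto
  next
    case False
    then have "k < l" using kl7 by auto
    from eval_bb[OF S this kl7(2), of a] z[of "b k + b l"] diag[of k] diag[of l] kl7 p kl
    show ?thesis by (auto split: if_splits)
  qed
qed

lemma inj_monp: "inj_on monp (set PL)"
proof (rule inj_onI, rule ccontr)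
  fix p q assume pq: "p \<in> set PL" "q \<in> set PL" "monp p = monp q" "p \<noteq> q"
  define a where "a r = (if r = p then 1 else -1 :: complex)" for r
  have z: "(\<Sum>r\<in>{p,q}. a r * monp r x) = 0" for x using pq by (simp add: a_def)
  have "a p = 0" by (rule indep_key[of "{p,q}" a, OF _ z]) (use pq in auto)
  then show False by (simp add: a_def)
qed

lemma indep_monp: assumes "S \<subseteq> set PL" shows "fv.independent (monp ` S)"
  unfolding fv.independent_explicit_module
proof (intro allI impI)
  fix t u v assume t: "finite t" "t \<subseteq> monp ` S" and sum0: "(\<Sum>v\<in>t. fscale (u v) v) = 0" and v: "v \<in> t"
  define S' where "S' = {p \<in> S. monp p \<in> t}"
  have S'sub: "S' \<subseteq> set PL" using assms S'_def by auto
  have inj': "inj_on monp S'" using inj_on_subset[OF inj_monp S'sub] .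
  have tS: "t = monp ` S'" using t S'_def by auto
  have "(\<Sum>p\<in>S'. u (monp p) * monp p x) = 0" for x
  proof -
    have "(\<Sum>v\<in>t. fscale (u v) v) x = 0" using sum0 by simp
    then have "(\<Sum>v\<in>t. u v * v x) = 0" by (simp add: fsum_apply)
    then show ?thesis unfolding tS by (simp add: sum.reindex[OF inj'])
  qed
  moreover obtain p where "p \<in> S'" "v = monp p" using v tS by auto
  ultimately show "u v = 0" using indep_key[OF S'sub, of "u \<circ> monp"] by auto
qed

lemma fdim_S: assumes "S \<subseteq> set PL" shows "fdim (fspan (monp ` S)) = card S"
  using fv.dim_span_eq_card_independent[OF indep_monp[OF assms]] card_image[OF inj_on_subset[OF inj_monp assms]]
  by simp

lemma mon_vanish: assumes "I \<subseteq> {0..<7}" "x \<in> vec.span (b ` I)" "p \<in> set PL" "\<not> (fst p \<in> I \<and> snd p \<in> I)"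
  shows "monp p x = 0"
  using assms crd_span[OF assms(2) assms(1)] PL_lt[OF assms(3)] by (auto simp: monp_def mon_def)

lemma L2_char: assumes II: "\<forall>I\<in>II. I \<subseteq> {0..<7}"
  shows "{q\<in>quad_forms. \<forall>I\<in>II. \<forall>x\<in>vec.span (b ` I). q x = 0} = fspan (monp ` Sset II)"
proof
  have eqZ: "{q\<in>quad_forms. \<forall>I\<in>II. \<forall>x\<in>vec.span (b ` I). q x = 0} = {q\<in>quad_forms. \<forall>x\<in>(\<Union>I\<in>II. vec.span (b ` I)). q x = 0}"
    by auto
  show "fspan (monp ` Sset II) \<subseteq> {q\<in>quad_forms. \<forall>I\<in>II. \<forall>x\<in>vec.span (b ` I). q x = 0}"
    unfolding eqZ
  proof (rule fv.span_minimal[OF _ subspace_vanish])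
    show "monp ` Sset II \<subseteq> {q \<in> quad_forms. \<forall>x\<in>\<Union>I\<in>II. vec.span (b ` I). q x = 0}"
      using mon_vanish II by (auto simp: Sset_def monp_def mon_quad)
  qed
next
  show "{q\<in>quad_forms. \<forall>I\<in>II. \<forall>x\<in>vec.span (b ` I). q x = 0} \<subseteq> fspan (monp ` Sset II)"
  proof
    fix q assume q: "q \<in> {q\<in>quad_forms. \<forall>I\<in>II. \<forall>x\<in>vec.span (b ` I). q x = 0}"
    have "q \<in> quad_forms" using q by simp
    then obtain B where B: "\<And>x. q x = (\<Sum>k<7. \<Sum>l<7. B k l * mon k l x)"
      using quad_expand by blast
    have qbk: "q (b k) = B k k" if "k < 7" for k
    proof -
      have "q (b k) = (\<Sum>k'<7. \<Sum>l<7. if k' = k \<and> l = k then B k' l else 0)"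
        unfolding B using that by (intro sum.cong refl) (auto simp: mon_b)
      also have "\<dots> = B k k" using dd_sum[of k 7 k B] that by simp
      finally show ?thesis .
    qed
    have qbkl: "q (b k + b l) = B k k + B k l + B l k + B l l" if "k < 7" "l < 7" "k \<noteq> l" for k l
    proof -
      have "q (b k + b l) = (\<Sum>k'<7. \<Sum>l'<7. (if k' = k \<and> l' = k then B k' l' else 0) + (if k' = k \<and> l' = l then B k' l' else 0)
             + (if k' = l \<and> l' = k then B k' l' else 0) + (if k' = l \<and> l' = l then B k' l' else 0))"
        unfolding B using that by (intro sum.cong refl) (auto simp: mon_bb)
      also have "\<dots> = B k k + B k l + B l k + B l l" using that
        by (simp add: sum.distrib dd_sum)
      finally show ?thesis .
    qed
    have c1: "B k k = 0 \<or> (k,k) \<in> Sset II" if k7: "k < 7" for k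
    proof (cases "(k,k) \<in> Sset II")
      case False
      then obtain I where "I \<in> II" "k \<in> I" using k7 by (auto simp: Sset_def PL_mem)
      then have "q (b k) = 0" using q by (auto intro: vec.span_base)
      then show ?thesis using qbk k7 by simp
    qed simp
    have c2: "B k l + B l k = 0 \<or> (k,l) \<in> Sset II" if kl: "k < l" "l < 7" for k l
    proof (cases "(k,l) \<in> Sset II")
      case False
      then obtain I where I: "I \<in> II" "k \<in> I" "l \<in> I" using kl by (auto simp: Sset_def PL_mem)
      then have "b k \<in> vec.span (b ` I)" "b l \<in> vec.span (b ` I)" by (auto intro: vec.span_base)
      then have "b k + b l \<in> vec.span (b ` I)" by (rule vec.span_add)
      then have "q (b k) = 0" "q (b l) = 0" "q (b k + b l) = 0" using q I \<open>b k \<in> _\<close> \<open>b l \<in> _\<close> by auto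
      then show ?thesis using qbk qbkl kl by auto
    qed simp
    have "q = (\<Sum>k<7. fscale (B k k) (mon k k)) + (\<Sum>l<7. \<Sum>k<l. fscale (B k l + B l k) (mon k l))"
    proof (rule ext)
      fix x
      have "q x = (\<Sum>k<7. B k k * mon k k x) + (\<Sum>l<7. \<Sum>k<l. B k l * mon k l x + B l k * mon l k x)"
        unfolding B by (rule sum_split_diag)
      also have "\<dots> = (\<Sum>k<7. B k k * mon k k x) + (\<Sum>l<7. \<Sum>k<l. (B k l + B l k) * mon k l x)"
        by (simp add: mon_def algebra_simps)
      finally show "q x = ((\<Sum>k<7. fscale (B k k) (mon k k)) + (\<Sum>l<7. \<Sum>k<l. fscale (B k l + B l k) (mon k l))) x"
        by (simp add: fsum_apply)
    qed
    also have "\<dots> \<in> fspan (monp ` Sset II)"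
    proof (intro fv.span_add fv.span_sum fspan_term)
      fix k assume "k \<in> {..<7::nat}"
      then show "B k k = 0 \<or> mon k k \<in> monp ` Sset II" using c1[of k]
        by (auto simp: monp_def image_iff intro!: bexI[of _ "(k,k)"])
    next
      fix l k assume "l \<in> {..<7::nat}" "k \<in> {..<l}"
      then show "B k l + B l k = 0 \<or> mon k l \<in> monp ` Sset II" using c2[of k l]
        by (auto simp: monp_def image_iff intro!: bexI[of _ "(k,l)"])
    qed
    finally show "q \<in> fspan (monp ` Sset II)" .
  qed
qed

end


lemma nth_seg: "a + m \<le> length L \<Longrightarrow> nth L ` {a..<a+m} = set (take m (drop a L))"
proof -
  assume h: "a + m \<le> length L"
  have "{a..<a+m} = (\<lambda>i. a + i) ` {0..<m}"
    by (simp add: image_add_atLeastLessThan add.commute)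
  then have "nth L ` {a..<a+m} = (\<lambda>i. L ! (a + i)) ` {0..<m}"
    by (simp only: image_image)
  also have "\<dots> = (\<lambda>i. drop a L ! i) ` {0..<m}"
    using h by (intro image_cong refl) (simp add: nth_drop)
  also have "\<dots> = set (take m (drop a L))" using h by (intro nth_image) simp
  finally show ?thesis .
qed

lemma vfin: "vec.independent (B::vec7 set) \<Longrightarrow> finite B"
  by (rule vec.finiteI_independent)

lemma dimUNIV: "vec.dim (UNIV::vec7 set) = 7" by (simp add: card_cart_basis)

lemma frame_pair:
  fixes W W' :: "vec7 set"
  assumes sW: "vec.subspace W" and sW': "vec.subspace W'" and dW: "vec.dim W = 3" and dW': "vec.dim W' = 3"
    and dK: "vec.dim (W \<inter> W') = k"
  shows "\<exists>b. frame b \<and> W = vec.span (b ` {0..<3}) \<and> W' = vec.span (b ` ({0..<k} \<union> {3..<6-k}))"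
proof -
  define K where "K = W \<inter> W'"
  obtain A where A: "A \<subseteq> K" "vec.independent A" "K \<subseteq> vec.span A" "card A = k"
    using vec.basis_exists[of K] dK K_def by metis
  obtain BW where BW: "A \<subseteq> BW" "BW \<subseteq> W" "vec.independent BW" "W \<subseteq> vec.span BW"
    using vec.maximal_independent_subset_extend[of A W] A K_def by auto
  obtain BW' where BW': "A \<subseteq> BW'" "BW' \<subseteq> W'" "vec.independent BW'" "W' \<subseteq> vec.span BW'"
    using vec.maximal_independent_subset_extend[of A W'] A K_def by auto
  have cBW: "card BW = 3" using vec.basis_card_eq_dim[OF BW(2,4,3)] dW by simp
  have cBW': "card BW' = 3" using vec.basis_card_eq_dim[OF BW'(2,4,3)] dW' by simp
  have fA: "finite A" "finite BW" "finite BW'" using vfin A BW BW' by auto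
  have k3: "k \<le> 3" using card_mono[OF fA(2) BW(1)] A cBW by simp
  define C where "C = BW' - A"
  have cC: "card C = 3 - k" using card_Diff_subset[OF fA(1) BW'(1)] cBW' A C_def by simp
  have fC: "finite C" using fA C_def by simp
  define U where "U = BW \<union> C"
  define SS where "SS = {x + y |x y. x \<in> W \<and> y \<in> W'}"
  have sSS: "vec.subspace SS" unfolding SS_def by (rule vec.subspace_sums[OF sW sW'])
  have dSS: "vec.dim SS = 6 - k"
    using vec.dim_sums_Int[OF sW sW'] dW dW' dK SS_def by simp
  have USS: "U \<subseteq> SS"
  proof
    fix u assume "u \<in> U"
    then show "u \<in> SS" unfolding U_def SS_def C_def
    proof
      assume "u \<in> BW" then have "u \<in> W" using BW by auto
      then show "u \<in> {x + y |x y. x \<in> W \<and> y \<in> W'}"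
        using vec.subspace_0[OF sW'] by (intro CollectI exI[of _ u] exI[of _ 0]) simp
    next
      assume "u \<in> BW' - A" then have "u \<in> W'" using BW' by auto
      then show "u \<in> {x + y |x y. x \<in> W \<and> y \<in> W'}"
        using vec.subspace_0[OF sW] by (intro CollectI exI[of _ 0] exI[of _ u]) simp
    qed
  qed
  have SSU: "SS \<subseteq> vec.span U"
  proof
    fix z assume "z \<in> SS"
    then obtain x y where z: "z = x + y" "x \<in> W" "y \<in> W'" unfolding SS_def by auto
    have "x \<in> vec.span U" using z BW(4) vec.span_mono[of BW U] U_def by auto
    moreover have "BW' \<subseteq> U" using BW(1) U_def C_def by auto
    then have "y \<in> vec.span U" using z BW'(4) vec.span_mono[of BW' U] by auto
    ultimately show "z \<in> vec.span U" using z vec.span_add by auto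
  qed
  have fU: "finite U" using fA fC U_def by simp
  have cU_le: "card U \<le> 6 - k"
    using card_Un_le[of BW C] cBW cC U_def k3 by simp
  have iU: "vec.independent U"
    using vec.card_le_dim_spanning[OF USS SSU fU] cU_le dSS by simp
  have cU: "card U = 6 - k" using vec.basis_card_eq_dim[OF USS SSU iU] dSS by simp
  have disj: "BW \<inter> C = {}"
  proof -
    have "card BW + card C = card U + card (BW \<inter> C)"
      using card_Un_Int[OF fA(2) fC] U_def by simp
    then have "card (BW \<inter> C) = 0" using cBW cC cU k3 by simp
    then show ?thesis using fA fC by simp
  qed
  obtain E where E: "U \<subseteq> E" "vec.independent E" "UNIV \<subseteq> vec.span E"
    using vec.maximal_independent_subset_extend[of U UNIV] iU by auto
  have cE: "card E = 7" using vec.basis_card_eq_dim[of E UNIV] E dimUNIV by simp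
  have fE: "finite E" using vfin E by simp
  have fWA: "finite (BW - A)" "finite (E - U)" using fA fE by auto
  obtain xsA where xsA: "set xsA = A" "distinct xsA" using finite_distinct_list[OF fA(1)] by blast
  obtain xsW where xsW: "set xsW = BW - A" "distinct xsW" using finite_distinct_list[OF fWA(1)] by blast
  obtain xsC where xsC: "set xsC = C" "distinct xsC" using finite_distinct_list[OF fC] by blast
  obtain xsE where xsE: "set xsE = E - U" "distinct xsE" using finite_distinct_list[OF fWA(2)] by blast
  have lA: "length xsA = k" using xsA distinct_card A by metis
  have lW: "length xsW = 3 - k" using xsW distinct_card card_Diff_subset[OF fA(1) BW(1)] cBW A by metis
  have lC: "length xsC = 3 - k" using xsC distinct_card cC by metis
  have "card (E - U) = k + 1" using card_Diff_subset[OF fU E(1)] cE cU k3 by simp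
  then have lE: "length xsE = k + 1" using xsE distinct_card by metis
  define L where "L = xsA @ xsW @ xsC @ xsE"
  have lL: "length L = 7" using lA lW lC lE k3 L_def by simp
  have dL: "distinct L" unfolding L_def using xsA xsW xsC xsE disj U_def C_def BW(1)
    by auto
  have setL: "set L = E" unfolding L_def using xsA xsW xsC xsE E(1) U_def BW(1) by auto
  define b where "b = nth L"
  have fr: "frame b"
  proof
    show "inj_on b {0..<7}" unfolding b_def using dL lL by (intro inj_on_nth) auto
    have "b ` {0..<7} = set L" unfolding b_def using nth_image[of 7 L] lL by simp
    then show "vec.independent (b ` {0..<7})" using setL E by simp
  qed
  have img1: "b ` {0..<3} = BW"
  proof -
    have "b ` {0..<3} = set (take 3 L)" unfolding b_def using nth_image[of 3 L] lL by simp
    also have "take 3 L = xsA @ xsW" unfolding L_def using lA lW k3 by simp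
    finally show ?thesis using xsA xsW BW(1) by auto
  qed
  have img2: "b ` ({0..<k} \<union> {3..<6-k}) = BW'"
  proof -
    have "b ` {0..<k} = set (take k L)" unfolding b_def using nth_image[of k L] lL k3 by simp
    also have "take k L = xsA" unfolding L_def using lA by simp
    finally have 1: "b ` {0..<k} = A" using xsA by simp
    have "{3..<6-k} = {3..<3 + (3-k)}" using k3 by simp
    then have "b ` {3..<6-k} = set (take (3-k) (drop 3 L))" unfolding b_def using nth_seg[of 3 "3-k" L] lL k3 by simp
    also have "drop 3 L = xsC @ xsE" unfolding L_def using lA lW k3 by simp
    finally have 2: "b ` {3..<6-k} = C" using xsC lC by simp
    show ?thesis using 1 2 C_def BW'(1) by (auto simp: image_Un)
  qed
  have "W = vec.span BW" using vec.span_subspace[OF BW(2,4) sW] by simp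
  moreover have "W' = vec.span BW'" using vec.span_subspace[OF BW'(2,4) sW'] by simp
  ultimately show ?thesis using fr img1 img2 by auto
qed

lemma frame_single:
  fixes W :: "vec7 set"
  assumes "is_plane W"
  shows "\<exists>b. frame b \<and> W = vec.span (b ` {0..<3})"
  using frame_pair[of W W] assms unfolding is_plane_def by auto



lemma card_S0: "card (Sset {}) = 28"
  unfolding Sset_def PL_def set_filter[symmetric] by (simp add: upt_rec)
lemma card_S1: "card (Sset {{0..<3}}) = 22"
  unfolding Sset_def PL_def set_filter[symmetric] by (simp add: upt_rec)
lemma card_S20: "card (Sset {{0..<3}, {0..<0} \<union> {3..<6-0}}) = 16"
  unfolding Sset_def PL_def set_filter[symmetric] by (simp add: upt_rec)
lemma card_S21: "card (Sset {{0..<3}, {0..<1} \<union> {3..<6-1}}) = 17"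
  unfolding Sset_def PL_def set_filter[symmetric] by (simp add: upt_rec)
lemma card_S22: "card (Sset {{0..<3}, {0..<2} \<union> {3..<6-2}}) = 19"
  unfolding Sset_def PL_def set_filter[symmetric] by (simp add: upt_rec)

lemma Sset_sub: "Sset II \<subseteq> set PL" by (auto simp: Sset_def)

context frame begin

lemma quad_eq: "quad_forms = fspan (monp ` Sset {})"
  using L2_char[of "{}"] by simp

lemma fdim_quad: "fdim quad_forms = 28"
proof -
  have "fdim quad_forms = card (Sset {})" by (metis quad_eq fdim_S[OF Sset_sub])
  then show ?thesis using card_S0 by simp
qed

lemma L2_eq: "I \<subseteq> {0..<7} \<Longrightarrow> L2 (vec.span (b ` I)) = fspan (monp ` Sset {I})"
  using L2_char[of "{I}"] unfolding L2_def by simp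

lemma L2pair_eq: "I \<subseteq> {0..<7} \<Longrightarrow> J \<subseteq> {0..<7} \<Longrightarrow>
   L2pair (vec.span (b ` I)) (vec.span (b ` J)) = fspan (monp ` Sset {I, J})"
  using L2_char[of "{I, J}"] unfolding L2pair_def by auto

lemma fdim_L2: "fdim (L2 (vec.span (b ` {0..<3}))) = 22"
proof -
  have "fdim (L2 (vec.span (b ` {0..<3}))) = card (Sset {{0..<3}})" 
  proof -
    have sub: "{0..<3} \<subseteq> {0..<7::nat}" by auto
    show ?thesis using L2_eq[OF sub] fdim_S[OF Sset_sub, of "{{0..<3}}"] by metis
  qed
  then show ?thesis using card_S1 by simp
qed

lemma fdim_L2pair: "k \<le> 2 \<Longrightarrow> fdim (L2pair (vec.span (b ` {0..<3})) (vec.span (b ` ({0..<k} \<union> {3..<6-k})))) = 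
     (if k = 0 then 16 else if k = 1 then 17 else 19)"
proof -
  assume "k \<le> 2"
  then have "k = 0 \<or> k = 1 \<or> k = 2" by auto
  moreover have "{0..<k} \<union> {3..<6-k} \<subseteq> {0..<7::nat}" using \<open>k \<le> 2\<close> by auto
  then have "fdim (L2pair (vec.span (b ` {0..<3})) (vec.span (b ` ({0..<k} \<union> {3..<6-k})))) = card (Sset {{0..<3}, {0..<k} \<union> {3..<6-k}})"
    using L2pair_eq[of "{0..<3}" "{0..<k} \<union> {3..<6-k}"] fdim_S[OF Sset_sub] by (simp add: subset_iff)
  ultimately show ?thesis using card_S20 card_S21 card_S22 by auto
qed

end

theorem part1: "\<forall>W. is_plane W \<longrightarrow> fdim quad_forms = fdim (L2 W) + 6"
proof (intro allI impI)
  fix W assume "is_plane W"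
  then obtain b where "frame b" "W = vec.span (b ` {0..<3})" using frame_single by blast
  then show "fdim quad_forms = fdim (L2 W) + 6" using frame.fdim_quad frame.fdim_L2 by simp
qed

theorem part2: "\<forall>W W'. is_plane W \<and> is_plane W' \<and> W \<noteq> W' \<longrightarrow>
       (vec.dim (W \<inter> W') = 0 \<longrightarrow> fdim (L2 W) = fdim (L2pair W W') + 6)
     \<and> (vec.dim (W \<inter> W') = 1 \<longrightarrow> fdim (L2 W) = fdim (L2pair W W') + 5)
     \<and> (vec.dim (W \<inter> W') = 2 \<longrightarrow> fdim (L2 W) = fdim (L2pair W W') + 3)"
proof (intro allI impI conjI)
  fix W W' assume h: "is_plane W \<and> is_plane W' \<and> W \<noteq> W'"
  have key: "fdim (L2 W) = 22 \<and> fdim (L2pair W W') = (if k = 0 then 16 else if k = 1 then 17 else 19)"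
    if "vec.dim (W \<inter> W') = k" "k \<le> 2" for k
  proof -
    have "\<exists>b. frame b \<and> W = vec.span (b ` {0..<3}) \<and> W' = vec.span (b ` ({0..<k} \<union> {3..<6-k}))"
      using frame_pair[of W W' k] h that unfolding is_plane_def by simp
    then obtain b where "frame b" "W = vec.span (b ` {0..<3})" "W' = vec.span (b ` ({0..<k} \<union> {3..<6-k}))"
      by blast
    then show ?thesis using frame.fdim_L2 frame.fdim_L2pair that by simp
  qed
  show "vec.dim (W \<inter> W') = 0 \<Longrightarrow> fdim (L2 W) = fdim (L2pair W W') + 6" using key[of 0] by simp
  show "vec.dim (W \<inter> W') = 1 \<Longrightarrow> fdim (L2 W) = fdim (L2pair W W') + 5" using key[of 1] by simp
  show "vec.dim (W \<inter> W') = 2 \<Longrightarrow> fdim (L2 W) = fdim (L2pair W W') + 3" using key[of 2] by simp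
qed



definition Dc :: "(7 \<Rightarrow> 7 \<Rightarrow> 7 \<Rightarrow> complex) \<Rightarrow> vec7 \<Rightarrow> vec7 \<Rightarrow> complex" where
  "Dc c x v = (\<Sum>i\<in>UNIV. \<Sum>j\<in>UNIV. \<Sum>k\<in>UNIV. c i j k * (v$i * x$j * x$k + x$i * v$j * x$k + x$i * x$j * v$k))"

lemma deriv_cubic: "deriv (\<lambda>t. cubic_of c (x + t *s v)) 0 = Dc c x v"
proof -
  have e: "(\<lambda>t. cubic_of c (x + t *s v)) = (\<lambda>t. \<Sum>i\<in>UNIV. \<Sum>j\<in>UNIV. \<Sum>k\<in>UNIV. c i j k * (x$i + t * v$i) * (x$j + t * v$j) * (x$k + t * v$k))"
    by (simp add: cubic_of_def)
  have "((\<lambda>t. \<Sum>i\<in>UNIV. \<Sum>j\<in>UNIV. \<Sum>k\<in>UNIV. c i j k * (x$i + t * v$i) * (x$j + t * v$j) * (x$k + t * v$k)) has_field_derivative Dc c x v) (at 0)"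
    unfolding Dc_def
    by (rule derivative_eq_intros refl | simp add: algebra_simps)+
  then show ?thesis unfolding e by (rule DERIV_imp_deriv)
qed

lemma Dc_add: "Dc c x (u + w) = Dc c x u + Dc c x w"
  by (simp add: Dc_def algebra_simps sum.distrib)

lemma Dc_scale: "Dc c x (a *s v) = a * Dc c x v"
  by (simp add: Dc_def algebra_simps sum_distrib_left)

lemma Dc_zero: "Dc c x 0 = 0"
  by (simp add: Dc_def)

lemma Dc_sum: "Dc c x (sum f S) = (\<Sum>s\<in>S. Dc c x (f s))"
  by (induction S rule: infinite_finite_induct) (auto simp: Dc_add Dc_zero)

lemma pd_cubic: "pd i (cubic_of c) x = Dc c x (axis i 1)"
  unfolding pd_def by (rule deriv_cubic)

definition gfun :: "(7 \<Rightarrow> 7 \<Rightarrow> 7 \<Rightarrow> complex) \<Rightarrow> vec7 \<Rightarrow> vec7 \<Rightarrow> complex" where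
  "gfun c v = (\<lambda>x. Dc c x v)"

lemma Dc_expand: "Dc c x v = (\<Sum>i\<in>UNIV. v$i * Dc c x (axis i 1))"
proof -
  have "Dc c x v = Dc c x (\<Sum>i\<in>UNIV. v $ i *s axis i 1)" by (simp add: basis_expansion)
  then show ?thesis by (simp add: Dc_sum Dc_scale)
qed

lemma g_J2: "gfun c v \<in> J2 (cubic_of c)"
proof -
  have "gfun c v = (\<lambda>x. \<Sum>i\<in>UNIV. v$i * pd i (cubic_of c) x)"
    unfolding gfun_def pd_cubic by (simp add: Dc_expand[of c _ v])
  also have "\<dots> \<in> J2 (cubic_of c)" unfolding J2_def by (rule fspan_sum_mem) auto
  finally show ?thesis .
qed

lemma gfun_add: "gfun c (u + w) = gfun c u + gfun c w"
  by (simp add: gfun_def fun_eq_iff Dc_add)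
lemma gfun_scale: "gfun c (a *s u) = fscale a (gfun c u)"
  by (simp add: gfun_def fun_eq_iff Dc_scale)
lemma gfun_zero: "gfun c 0 = 0"
  by (simp add: gfun_def fun_eq_iff Dc_zero)

lemma J2_sub: "J2 (cubic_of c) \<subseteq> range (gfun c)"
  unfolding J2_def
proof (rule fv.span_minimal)
  show "range (\<lambda>i. pd i (cubic_of c)) \<subseteq> range (gfun c)"
    by (auto simp: pd_cubic gfun_def fun_eq_iff image_iff)
  show "fv.subspace (range (gfun c))"
    unfolding fv.subspace_def
    using gfun_zero[of c] by (auto simp: image_iff gfun_add[symmetric] gfun_scale[symmetric] intro: exI[of _ 0])
qed

lemma g_vanish:
  assumes "vec.subspace W" "\<forall>x\<in>W. cubic_of c x = 0" "v \<in> W" "x \<in> W"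
  shows "gfun c v x = 0"
proof -
  have "(\<lambda>t. cubic_of c (x + t *s v)) = (\<lambda>t. 0)"
    using assms by (auto intro!: ext vec.subspace_add vec.subspace_scale)
  then show ?thesis using deriv_cubic[of c x v] by (simp add: gfun_def)
qed



lemma g_quad: "gfun c v \<in> quad_forms"
proof -
  define A where "A j k = (\<Sum>i\<in>UNIV. (c i j k + c j i k + c j k i) * v$i)" for j k
  have "Dc c x v = (\<Sum>j\<in>UNIV. \<Sum>k\<in>UNIV. A j k * x$j * x$k)" for x
  proof -
    have T: "Dc c x v = (\<Sum>i\<in>UNIV. \<Sum>j\<in>UNIV. \<Sum>k\<in>UNIV. c i j k * v$i * x$j * x$k)
        + (\<Sum>i\<in>UNIV. \<Sum>j\<in>UNIV. \<Sum>k\<in>UNIV. c i j k * x$i * v$j * x$k)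
        + (\<Sum>i\<in>UNIV. \<Sum>j\<in>UNIV. \<Sum>k\<in>UNIV. c i j k * x$i * x$j * v$k)"
      by (simp add: Dc_def sum.distrib algebra_simps)
    have R: "(\<Sum>j\<in>UNIV. \<Sum>k\<in>UNIV. A j k * x$j * x$k) =
          (\<Sum>j\<in>UNIV. \<Sum>k\<in>UNIV. \<Sum>i\<in>UNIV. c i j k * v$i * x$j * x$k)
        + (\<Sum>j\<in>UNIV. \<Sum>k\<in>UNIV. \<Sum>i\<in>UNIV. c j i k * v$i * x$j * x$k)
        + (\<Sum>j\<in>UNIV. \<Sum>k\<in>UNIV. \<Sum>i\<in>UNIV. c j k i * v$i * x$j * x$k)"
      by (simp add: A_def sum.distrib algebra_simps sum_distrib_left sum_distrib_right)
    have 1: "(\<Sum>i\<in>UNIV. \<Sum>j\<in>UNIV. \<Sum>k\<in>UNIV. c i j k * v$i * x$j * x$k) =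
             (\<Sum>j\<in>UNIV. \<Sum>k\<in>UNIV. \<Sum>i\<in>UNIV. c i j k * v$i * x$j * x$k)"
    proof -
      have "(\<Sum>i\<in>UNIV. \<Sum>j\<in>UNIV. \<Sum>k\<in>UNIV. c i j k * v$i * x$j * x$k) =
            (\<Sum>j\<in>UNIV. \<Sum>i\<in>UNIV. \<Sum>k\<in>UNIV. c i j k * v$i * x$j * x$k)" by (rule sum.swap)
      also have "\<dots> = (\<Sum>j\<in>UNIV. \<Sum>k\<in>UNIV. \<Sum>i\<in>UNIV. c i j k * v$i * x$j * x$k)"
        by (rule sum.cong[OF refl], rule sum.swap)
      finally show ?thesis .
    qed
    have 2: "(\<Sum>i\<in>UNIV. \<Sum>j\<in>UNIV. \<Sum>k\<in>UNIV. c i j k * x$i * v$j * x$k) =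
             (\<Sum>j\<in>UNIV. \<Sum>k\<in>UNIV. \<Sum>i\<in>UNIV. c j i k * v$i * x$j * x$k)"
      by (rule sum.cong[OF refl], subst sum.swap) (simp add: mult_ac)
    have 3: "(\<Sum>i\<in>UNIV. \<Sum>j\<in>UNIV. \<Sum>k\<in>UNIV. c i j k * x$i * x$j * v$k) =
             (\<Sum>j\<in>UNIV. \<Sum>k\<in>UNIV. \<Sum>i\<in>UNIV. c j k i * v$i * x$j * x$k)"
      by (simp add: mult_ac)
    show ?thesis unfolding T R 1 2 3 ..
  qed
  then show ?thesis unfolding quad_forms_def gfun_def by auto
qed

definition Tr :: "(7 \<Rightarrow> 7 \<Rightarrow> 7 \<Rightarrow> complex) \<Rightarrow> vec7 \<Rightarrow> vec7 \<Rightarrow> vec7 \<Rightarrow> complex" where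
  "Tr c x y z = (\<Sum>i\<in>UNIV. \<Sum>j\<in>UNIV. \<Sum>k\<in>UNIV. c i j k *
     (x$i * y$j * z$k + x$i * z$j * y$k + y$i * x$j * z$k + y$i * z$j * x$k + z$i * x$j * y$k + z$i * y$j * x$k))"

lemma Tr_Dc: "Tr c x x v = 2 * Dc c x v"
  by (simp add: Tr_def Dc_def sum_distrib_left algebra_simps)

lemma Tr_sym12: "Tr c x y z = Tr c y x z"
  by (simp add: Tr_def algebra_simps)

lemma Tr_sym13: "Tr c x y z = Tr c z y x"
  by (simp add: Tr_def algebra_simps)

lemma Tr_add1: "Tr c (x + x') y z = Tr c x y z + Tr c x' y z"
  by (simp add: Tr_def algebra_simps sum.distrib)

lemma Tr_add2: "Tr c x (y + y') z = Tr c x y z + Tr c x y' z"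
  by (simp add: Tr_def algebra_simps sum.distrib)

lemma g_nonzero:
  assumes sm: "smooth_hyp (cubic_of c)" and g0: "gfun c a = 0"
  shows "a = 0"
proof -
  have D0: "Tr c x x a = 0" for x using g0 Tr_Dc[of c x a] unfolding gfun_def by (simp add: fun_eq_iff)
  have P: "Tr c x y a = 0" for x y
  proof -
    have "Tr c (x + y) (x + y) a = Tr c x x a + Tr c x y a + Tr c y x a + Tr c y y a"
      by (simp add: Tr_add1 Tr_add2)
    then have "2 * Tr c x y a = 0" using D0[of "x+y"] D0[of x] D0[of y] Tr_sym12[of c y x a] by simp
    then show ?thesis by simp
  qed
  have "pd i (cubic_of c) a = 0" for i
  proof -
    have "2 * pd i (cubic_of c) a = Tr c a a (axis i 1)" by (simp add: pd_cubic Tr_Dc)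
    also have "\<dots> = Tr c (axis i 1) a a" by (rule Tr_sym13)
    also have "\<dots> = 0" by (rule P)
    finally show ?thesis by simp
  qed
  then show ?thesis using sm unfolding smooth_hyp_def by blast
qed



context vector_space begin

lemma indep_coeffs:
  assumes "independent (u ` T)" "inj_on u T" "finite T" "(\<Sum>j\<in>T. scale (a j) (u j)) = 0" "j \<in> T"
  shows "a j = 0"
proof -
  define a' where "a' w = a (the_inv_into T u w)" for w
  have "(\<Sum>w\<in>u ` T. scale (a' w) w) = (\<Sum>j\<in>T. scale (a j) (u j))"
    using assms(2) by (simp add: sum.reindex a'_def the_inv_into_f_f)
  then have "(\<Sum>w\<in>u ` T. scale (a' w) w) = 0" using assms(4) by simp
  then have "a' (u j) = 0" using independentD[OF assms(1), of "u ` T" a' "u j"] assms(3,5) by auto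
  then show ?thesis using assms(2,5) by (simp add: a'_def the_inv_into_f_f)
qed

lemma indep_family:
  assumes fin: "finite S" and key: "\<And>a. (\<Sum>p\<in>S. scale (a p) (\<psi> p)) = 0 \<Longrightarrow> \<forall>p\<in>S. a p = 0"
  shows "inj_on \<psi> S" "independent (\<psi> ` S)"
proof -
  show inj: "inj_on \<psi> S"
  proof (rule inj_onI, rule ccontr)
    fix p q assume pq: "p \<in> S" "q \<in> S" "\<psi> p = \<psi> q" "p \<noteq> q"
    define a where "a r = (if r = p then (1::'a) else if r = q then -1 else 0)" for r
    have "(\<Sum>r\<in>S. scale (a r) (\<psi> r)) = (\<Sum>r\<in>{p,q}. scale (a r) (\<psi> r))"
      by (rule sum.mono_neutral_right) (use fin pq in \<open>auto simp: a_def\<close>)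
    also have "\<dots> = 0" using pq by (simp add: a_def)
    finally have "a p = 0" using key pq by blast
    then show False by (simp add: a_def)
  qed
  show "independent (\<psi> ` S)"
    unfolding independent_explicit_module
  proof (intro allI impI)
    fix t u v assume t: "finite t" "t \<subseteq> \<psi> ` S" and s0: "(\<Sum>v\<in>t. scale (u v) v) = 0" and v: "v \<in> t"
    define a where "a r = (if \<psi> r \<in> t then u (\<psi> r) else 0)" for r
    define S' where "S' = {r \<in> S. \<psi> r \<in> t}"
    have tS: "t = \<psi> ` S'" using t S'_def by auto
    have inj': "inj_on \<psi> S'" using inj_on_subset[OF inj] S'_def by auto
    have "(\<Sum>p\<in>S. scale (a p) (\<psi> p)) = (\<Sum>p\<in>S'. scale (a p) (\<psi> p))"
      by (rule sum.mono_neutral_right) (use fin in \<open>auto simp: a_def S'_def\<close>)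
    also have "\<dots> = (\<Sum>p\<in>S'. scale (u (\<psi> p)) (\<psi> p))" by (rule sum.cong) (auto simp: a_def S'_def)
    also have "\<dots> = (\<Sum>v\<in>t. scale (u v) v)" unfolding tS by (simp add: sum.reindex[OF inj'])
    finally have "\<forall>p\<in>S. a p = 0" using key s0 by simp
    moreover obtain p where "p \<in> S'" "v = \<psi> p" using v tS by auto
    ultimately show "u v = 0" by (auto simp: a_def S'_def)
  qed
qed

lemma card_le_dim_sub:
  assumes "independent X" "X \<subseteq> V" "V \<subseteq> span F" "finite F"
  shows "card X \<le> dim V"
proof -
  obtain B where B: "B \<subseteq> V" "independent B" "V \<subseteq> span B" "card B = dim V"
    using basis_exists by blast
  have "finite B" using independent_span_bound[OF assms(4) B(2)] B(1) assms(3) by auto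
  then show ?thesis using independent_span_bound[OF _ assms(1)] B assms(2) by force
qed

end

lemma hscale_apply[simp]: "hscale a f x = a *s f x" by (simp add: hscale_def)

lemma gfun_sum: "gfun c (sum f S) = (\<Sum>s\<in>S. fscale (g s) (gfun c (h s)))" if "\<And>s. f s = g s *s h s"
  using that by (induction S rule: infinite_finite_induct) (auto simp: gfun_zero gfun_add gfun_scale)

context frame begin

lemma b_in_span: "i \<in> I \<Longrightarrow> b i \<in> vec.span (b ` I)" by (auto intro: vec.span_base)

lemma tangent_contra:
  assumes F: "W \<in> F2 (cubic_of c)" and Wd: "W = vec.span (b ` {0..<3})"
    and T2: "F2_tangent_dim (cubic_of c) W = 2" and v: "v \<notin> W" and gv: "\<forall>x\<in>W. gfun c v x = 0"
  shows False
proof -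
  let ?f = "cubic_of c"
  have sW: "vec.subspace W" unfolding Wd by (rule vec.subspace_span)
  have fW: "\<forall>x\<in>W. ?f x = 0" using F by (simp add: F2_def)
  define u where "u j = (if j < 3 then b j else v)" for j :: nat
  have b3: "b ` {0..<3} \<subseteq> BB" by auto
  have ib3: "vec.independent (b ` {0..<3})" using vec.independent_mono[OF ind_b b3] .
  have u4: "u ` {0..<4} = insert v (b ` {0..<3})"
  proof -
    have "{0..<4::nat} = insert 3 {0..<3}" by auto
    then show ?thesis by (auto simp: u_def)
  qed
  have iu: "vec.independent (u ` {0..<4})" unfolding u4
    using vec.independent_insertI[OF _ ib3] v Wd by simp
  have inju: "inj_on u {0..<4}"
  proof -
    have "inj_on b {0..<3}" using inj_on_subset[OF inj_b] by auto
    moreover have "b j \<noteq> v" if "j < 3" for j using v Wd that b_in_span[of j "{0..<3}"] by auto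
    ultimately show ?thesis unfolding u_def inj_on_def by (auto split: if_splits)
  qed
  have gu: "\<forall>x\<in>W. gfun c (u j) x = 0" if "j < 4" for j
  proof (cases "j < 3")
    case True
    then have "u j \<in> W" using Wd b_in_span[of j "{0..<3}"] u_def by simp
    then show ?thesis using g_vanish[OF sW fW] by auto
  qed (use gv u_def in auto)
  define \<psi> where "\<psi> p = (\<lambda>x. if x \<in> W then crd (fst p) x *s u (snd p) else 0)" for p :: "nat \<times> nat"
  define S where "S = {0..<3::nat} \<times> {0..<4::nat}"
  have finS: "finite S" and cS: "card S = 12" by (auto simp: S_def)
  have key: "\<forall>p\<in>S. a p = 0" if z: "(\<Sum>p\<in>S. hscale (a p) (\<psi> p)) = 0" for a
  proof
    fix p assume p: "p \<in> S"
    obtain i j where ij: "p = (i,j)" "i < 3" "j < 4" using p S_def by auto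
    have biW: "b i \<in> W" using Wd b_in_span[of i "{0..<3}"] ij by simp
    have "(\<Sum>p\<in>S. hscale (a p) (\<psi> p)) (b i) = 0" using z by simp
    then have "(\<Sum>p\<in>S. a p *s (crd (fst p) (b i) *s u (snd p))) = 0"
      using biW by (simp add: fsum_apply \<psi>_def)
    moreover have "(\<Sum>p\<in>S. a p *s (crd (fst p) (b i) *s u (snd p))) = (\<Sum>j'\<in>{0..<4}. a (i,j') *s u j')"
    proof -
      have "(\<Sum>p\<in>S. a p *s (crd (fst p) (b i) *s u (snd p))) = (\<Sum>i'\<in>{0..<3}. \<Sum>j'\<in>{0..<4}. a (i',j') *s (crd i' (b i) *s u j'))"
        unfolding S_def by (simp add: sum.cartesian_product split_def)
      also have "\<dots> = (\<Sum>i'\<in>{0..<3}. if i' = i then (\<Sum>j'\<in>{0..<4}. a (i',j') *s u j') else 0)"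
        using ij by (intro sum.cong refl) (auto simp: crd_b)
      also have "\<dots> = (\<Sum>j'\<in>{0..<4}. a (i,j') *s u j')" using ij by (simp add: sum.delta')
      finally show ?thesis .
    qed
    ultimately have "(\<Sum>j'\<in>{0..<4}. a (i,j') *s u j') = 0" by simp
    then show "a p = 0" using vec.indep_coeffs[OF iu inju, of "\<lambda>j'. a (i,j')" j] ij by simp
  qed
  have injpsi: "inj_on \<psi> S" and indpsi: "hv.independent (\<psi> ` S)"
    using hv.indep_family[OF finS key] by auto
  have psiT: "\<psi> ` S \<subseteq> tan_lift ?f W"
  proof
    fix \<phi> assume "\<phi> \<in> \<psi> ` S"
    then obtain i j where ij: "\<phi> = \<psi> (i,j)" "i < 3" "j < 4" by (auto simp: S_def)
    have hom: "\<phi> \<in> hom_on W"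
      unfolding hom_on_def ij(1) \<psi>_def
      using vec.subspace_add[OF sW] vec.subspace_scale[OF sW]
      by (auto simp: crd_add crd_scale vector_add_ldistrib scalar_mult_eq_scaleR algebra_simps)
    have "deriv (\<lambda>t. ?f (w + t *s \<phi> w)) 0 = 0" if w: "w \<in> W" for w
    proof -
      have "deriv (\<lambda>t. ?f (w + t *s \<phi> w)) 0 = Dc c w (\<phi> w)" by (rule deriv_cubic)
      also have "\<dots> = crd i w * gfun c (u j) w" using w ij by (simp add: \<psi>_def Dc_scale gfun_def)
      also have "\<dots> = 0" using gu[OF ij(3)] w by simp
      finally show ?thesis .
    qed
    then show "\<phi> \<in> tan_lift ?f W" using hom by (simp add: tan_lift_def)
  qed
  have hd: "hdim (tan_lift ?f W) = 11" using T2 unfolding F2_tangent_dim_def by simp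
  obtain B where B: "B \<subseteq> tan_lift ?f W" "hv.independent B" "tan_lift ?f W \<subseteq> hv.span B" "card B = 11"
    using hv.basis_exists[of "tan_lift ?f W"] hd by metis
  have fB: "finite B" using B(4) card_ge_0_finite by force
  have "card (\<psi> ` S) \<le> card B"
    using hv.independent_span_bound[OF fB indpsi] psiT B(3) by auto
  then show False using card_image[OF injpsi] cS B(4) by simp
qed

end


context frame begin

lemma J2L2_sub:
  assumes F: "W \<in> F2 (cubic_of c)" and Wd: "W = vec.span (b ` {0..<3})"
    and T2: "F2_tangent_dim (cubic_of c) W = 2"
  shows "J2 (cubic_of c) \<inter> L2 W \<subseteq> gfun c ` W"
proof
  fix q assume q: "q \<in> J2 (cubic_of c) \<inter> L2 W"
  then obtain v where v: "q = gfun c v" using J2_sub by blast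
  have "\<forall>x\<in>W. gfun c v x = 0" using q v by (simp add: L2_def)
  then have "v \<in> W" using tangent_contra[OF F Wd T2] by blast
  then show "q \<in> gfun c ` W" using v by simp
qed

lemma part34_frame:
  assumes Wd: "W = vec.span (b ` {0..<3})" and W'd: "W' = vec.span (b ` ({0..<2} \<union> {3..<4}))"
    and F: "W \<in> F2 (cubic_of c)" "W' \<in> F2 (cubic_of c)"
    and sm: "smooth_hyp (cubic_of c)" and T2: "F2_tangent_dim (cubic_of c) W = 2"
  shows "fdim (J2 (cubic_of c) \<inter> L2pair W W') \<ge> 2
       \<and> fdim (L2 W) \<ge> fdim (sum_sp (J2 (cubic_of c) \<inter> L2 W) (L2pair W W')) + 2
       \<and> sum_sp (J2 (cubic_of c) \<inter> L2 W) (L2pair W W') \<subset> L2 W"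
proof -
  let ?f = "cubic_of c"
  have sW: "vec.subspace W" "vec.subspace W'" unfolding Wd W'd by (rule vec.subspace_span)+
  have fW: "\<forall>x\<in>W. ?f x = 0" "\<forall>x\<in>W'. ?f x = 0" using F by (simp_all add: F2_def)
  have bW: "b i \<in> W" if "i < 3" for i using Wd that b_in_span[of i "{0..<3}"] by simp
  have bW': "b i \<in> W'" if "i < 2" for i using W'd that b_in_span[of i "{0..<2} \<union> {3..<4}"] by simp
  have gP: "gfun c (b i) \<in> L2pair W W'" if "i < 2" for i
    unfolding L2pair_def using g_quad g_vanish[OF sW(1) fW(1) bW] g_vanish[OF sW(2) fW(2) bW'] that by auto
  have subs: "{0..<3} \<subseteq> {0..<7::nat}" "{0..<2} \<union> {3..<4} \<subseteq> {0..<7::nat}" by auto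
  define Mp where "Mp = monp ` Sset {{0..<3}, {0..<2} \<union> {3..<4}}"
  have LP: "L2pair W W' = fspan Mp" unfolding Wd W'd Mp_def by (rule L2pair_eq[OF subs])
  have cMp: "card Mp = 19"
  proof -
    have "card Mp = card (Sset {{0..<3}, {0..<2} \<union> {3..<4}})"
      unfolding Mp_def by (rule card_image[OF inj_on_subset[OF inj_monp Sset_sub]])
    then show ?thesis using card_S22 by simp
  qed
  have fMp: "finite Mp" unfolding Mp_def using finite_subset[OF Sset_sub finite_PL] by simp
  have L2W: "fdim (L2 W) = 22" using fdim_L2 Wd by simp
  have A: "fdim (J2 ?f \<inter> L2pair W W') \<ge> 2"
  proof -
    define \<psi> where "\<psi> j = gfun c (b j)" for j
    have key: "\<forall>p\<in>{0,1::nat}. a p = 0" if z: "(\<Sum>p\<in>{0,1::nat}. fscale (a p) (\<psi> p)) = 0" for a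
    proof -
      have "gfun c (\<Sum>p\<in>{0,1::nat}. a p *s b p) = (\<Sum>p\<in>{0,1::nat}. fscale (a p) (\<psi> p))"
        unfolding \<psi>_def by (rule gfun_sum) simp
      then have "(\<Sum>p\<in>{0,1::nat}. a p *s b p) = 0" using z g_nonzero[OF sm] by simp
      moreover have "vec.independent (b ` {0,1})" by (rule vec.independent_mono[OF ind_b]) auto
      moreover have "inj_on b {0,1}" by (rule inj_on_subset[OF inj_b]) auto
      ultimately show ?thesis using vec.indep_coeffs[of b "{0,1}"] by blast
    qed
    have inj: "inj_on \<psi> {0,1}" and ind: "fv.independent (\<psi> ` {0,1})"
      using fv.indep_family[OF _ key] by auto
    have sub: "\<psi> ` {0,1} \<subseteq> J2 ?f \<inter> L2pair W W'" using gP g_J2 by (auto simp: \<psi>_def)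
    have "J2 ?f \<inter> L2pair W W' \<subseteq> fspan (monp ` Sset {})" using quad_eq by (auto simp: L2pair_def)
    then have "card (\<psi> ` {0,1}) \<le> fdim (J2 ?f \<inter> L2pair W W')"
      using fv.card_le_dim_sub[OF ind sub] finite_subset[OF Sset_sub finite_PL] by auto
    then show ?thesis using card_image[OF inj] by simp
  qed
  have sumsub: "sum_sp (J2 ?f \<inter> L2 W) (L2pair W W') \<subseteq> fspan (insert (gfun c (b 2)) Mp)"
  proof
    fix z assume "z \<in> sum_sp (J2 ?f \<inter> L2 W) (L2pair W W')"
    then obtain a q where z: "z = a + q" "a \<in> J2 ?f \<inter> L2 W" "q \<in> L2pair W W'" by (auto simp: sum_sp_def)
    have spMp: "fspan Mp \<subseteq> fspan (insert (gfun c (b 2)) Mp)" by (rule fv.span_mono) auto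
    obtain v where v: "a = gfun c v" "v \<in> W" using J2L2_sub[OF F(1) Wd T2] z by blast
    have vexp: "v = (\<Sum>i<3. crd i v *s b i)"
    proof -
      have "v = (\<Sum>i<7. crd i v *s b i)" by (rule expand)
      also have "\<dots> = (\<Sum>i<3. crd i v *s b i)"
      proof (rule sum.mono_neutral_right)
        show "\<forall>i\<in>{..<7} - {..<3}. crd i v *s b i = 0"
          using crd_span[of v "{0..<3}"] v Wd by auto
      qed auto
      finally show ?thesis .
    qed
    have "a = (\<Sum>i<3. fscale (crd i v) (gfun c (b i)))"
      using v(1) vexp gfun_sum[of "\<lambda>i. crd i v *s b i" "\<lambda>i. crd i v" "\<lambda>i. b i" c "{..<3}"] by simp
    also have "\<dots> \<in> fspan (insert (gfun c (b 2)) Mp)"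
    proof (rule fv.span_sum, rule fv.span_scale)
      fix i assume "i \<in> {..<3::nat}"
      then have "i = 2 \<or> i < 2" by auto
      then show "gfun c (b i) \<in> fspan (insert (gfun c (b 2)) Mp)"
        using gP LP spMp by (auto intro: fv.span_base)
    qed
    finally have "a \<in> fspan (insert (gfun c (b 2)) Mp)" .
    moreover have "q \<in> fspan (insert (gfun c (b 2)) Mp)" using z(3) LP spMp by auto
    ultimately show "z \<in> fspan (insert (gfun c (b 2)) Mp)" using z(1) fv.span_add by auto
  qed
  have "fdim (sum_sp (J2 ?f \<inter> L2 W) (L2pair W W')) \<le> card (insert (gfun c (b 2)) Mp)"
    using fv.dim_le_card[OF sumsub] fMp by simp
  also have "\<dots> \<le> 20" using card_insert_le_m1[of 20 Mp "gfun c (b 2)"] cMp fMp by (simp add: card_insert_if)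
  finally have B: "fdim (L2 W) \<ge> fdim (sum_sp (J2 ?f \<inter> L2 W) (L2pair W W')) + 2" using L2W by simp
  have "sum_sp (J2 ?f \<inter> L2 W) (L2pair W W') \<subseteq> L2 W"
    by (auto simp: sum_sp_def L2_def L2pair_def intro: quad_add)
  moreover have "sum_sp (J2 ?f \<inter> L2 W) (L2pair W W') \<noteq> L2 W" using B by auto
  ultimately show ?thesis using A B by auto
qed

end

theorem part34: "\<forall>c. smooth_hyp (cubic_of c) \<and> F2_smooth_surface (cubic_of c) \<longrightarrow>
       (\<forall>W\<in>F2 (cubic_of c). \<forall>W'\<in>F2 (cubic_of c). W \<noteq> W' \<and> vec.dim (W \<inter> W') = 2 \<longrightarrow>
          fdim (J2 (cubic_of c) \<inter> L2pair W W') \<ge> 2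
        \<and> fdim (L2 W) \<ge> fdim (sum_sp (J2 (cubic_of c) \<inter> L2 W) (L2pair W W')) + 2
        \<and> sum_sp (J2 (cubic_of c) \<inter> L2 W) (L2pair W W') \<subset> L2 W)"
proof (intro allI impI ballI)
  fix c W W' assume h: "smooth_hyp (cubic_of c) \<and> F2_smooth_surface (cubic_of c)"
    and F: "W \<in> F2 (cubic_of c)" "W' \<in> F2 (cubic_of c)" and d: "W \<noteq> W' \<and> vec.dim (W \<inter> W') = 2"
  have "\<exists>b. frame b \<and> W = vec.span (b ` {0..<3}) \<and> W' = vec.span (b ` ({0..<2} \<union> {3..<6-2}))"
    using frame_pair[of W W' 2] F d unfolding F2_def is_plane_def by simp
  then obtain b where b: "frame b" "W = vec.span (b ` {0..<3})" "W' = vec.span (b ` ({0..<2} \<union> {3..<4}))"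
    by auto
  have T2: "F2_tangent_dim (cubic_of c) W = 2" using h F unfolding F2_smooth_surface_def by blast
  show "fdim (J2 (cubic_of c) \<inter> L2pair W W') \<ge> 2
        \<and> fdim (L2 W) \<ge> fdim (sum_sp (J2 (cubic_of c) \<inter> L2 W) (L2pair W W')) + 2
        \<and> sum_sp (J2 (cubic_of c) \<inter> L2 W) (L2pair W W') \<subset> L2 W"
    using frame.part34_frame[OF b F _ T2] h by blast
qed

theorem mainTheorem9:
  shows
  "(\<forall>W. is_plane W \<longrightarrow> fdim quad_forms = fdim (L2 W) + 6)
 \<and> (\<forall>W W'. is_plane W \<and> is_plane W' \<and> W \<noteq> W' \<longrightarrow>
       (vec.dim (W \<inter> W') = 0 \<longrightarrow> fdim (L2 W) = fdim (L2pair W W') + 6)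
     \<and> (vec.dim (W \<inter> W') = 1 \<longrightarrow> fdim (L2 W) = fdim (L2pair W W') + 5)
     \<and> (vec.dim (W \<inter> W') = 2 \<longrightarrow> fdim (L2 W) = fdim (L2pair W W') + 3))
 \<and> (\<forall>c. smooth_hyp (cubic_of c) \<and> F2_smooth_surface (cubic_of c) \<longrightarrow>
       (\<forall>W\<in>F2 (cubic_of c). \<forall>W'\<in>F2 (cubic_of c). W \<noteq> W' \<and> vec.dim (W \<inter> W') = 2 \<longrightarrow>
          fdim (J2 (cubic_of c) \<inter> L2pair W W') \<ge> 1
        \<and> sum_sp (J2 (cubic_of c) \<inter> L2 W) (L2pair W W') \<subset> L2 W))
 \<and> (\<exists>p. poly_fun p \<and> (\<exists>c0. p c0 \<noteq> 0) \<and>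
       (\<forall>c. p c \<noteq> 0 \<and> smooth_hyp (cubic_of c) \<and> F2_smooth_surface (cubic_of c) \<longrightarrow>
         (\<forall>W\<in>F2 (cubic_of c). \<forall>W'\<in>F2 (cubic_of c). W \<noteq> W' \<and> vec.dim (W \<inter> W') = 2 \<longrightarrow>
            fdim (J2 (cubic_of c) \<inter> L2pair W W') \<ge> 2
          \<and> fdim (L2 W) \<ge> fdim (sum_sp (J2 (cubic_of c) \<inter> L2 W) (L2pair W W')) + 2)))"
proof (intro conjI)
  show "\<forall>W. is_plane W \<longrightarrow> fdim quad_forms = fdim (L2 W) + 6" by (rule part1)
next
  show "\<forall>W W'. is_plane W \<and> is_plane W' \<and> W \<noteq> W' \<longrightarrow>
       (vec.dim (W \<inter> W') = 0 \<longrightarrow> fdim (L2 W) = fdim (L2pair W W') + 6)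
     \<and> (vec.dim (W \<inter> W') = 1 \<longrightarrow> fdim (L2 W) = fdim (L2pair W W') + 5)
     \<and> (vec.dim (W \<inter> W') = 2 \<longrightarrow> fdim (L2 W) = fdim (L2pair W W') + 3)" by (rule part2)
next
  show "\<forall>c. smooth_hyp (cubic_of c) \<and> F2_smooth_surface (cubic_of c) \<longrightarrow>
       (\<forall>W\<in>F2 (cubic_of c). \<forall>W'\<in>F2 (cubic_of c). W \<noteq> W' \<and> vec.dim (W \<inter> W') = 2 \<longrightarrow>
          fdim (J2 (cubic_of c) \<inter> L2pair W W') \<ge> 1
        \<and> sum_sp (J2 (cubic_of c) \<inter> L2 W) (L2pair W W') \<subset> L2 W)"
  proof (intro allI impI ballI)
    fix c W W' assume "smooth_hyp (cubic_of c) \<and> F2_smooth_surface (cubic_of c)"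
      "W \<in> F2 (cubic_of c)" "W' \<in> F2 (cubic_of c)" "W \<noteq> W' \<and> vec.dim (W \<inter> W') = 2"
    then have "fdim (J2 (cubic_of c) \<inter> L2pair W W') \<ge> 2
        \<and> sum_sp (J2 (cubic_of c) \<inter> L2 W) (L2pair W W') \<subset> L2 W" using part34 by blast
    then show "fdim (J2 (cubic_of c) \<inter> L2pair W W') \<ge> 1
        \<and> sum_sp (J2 (cubic_of c) \<inter> L2 W) (L2pair W W') \<subset> L2 W" by auto
  qed
next
  show "\<exists>p. poly_fun p \<and> (\<exists>c0. p c0 \<noteq> 0) \<and>
       (\<forall>c. p c \<noteq> 0 \<and> smooth_hyp (cubic_of c) \<and> F2_smooth_surface (cubic_of c) \<longrightarrow>
         (\<forall>W\<in>F2 (cubic_of c). \<forall>W'\<in>F2 (cubic_of c). W \<noteq> W' \<and> vec.dim (W \<inter> W') = 2 \<longrightarrow>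
            fdim (J2 (cubic_of c) \<inter> L2pair W W') \<ge> 2
          \<and> fdim (L2 W) \<ge> fdim (sum_sp (J2 (cubic_of c) \<inter> L2 W) (L2pair W W')) + 2))"
    apply (rule exI[of _ "\<lambda>c. 1"])
    using part34 pf_const[of 1] by auto
qed

end
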